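(* Let $(S,\mathcal C)$ be a connectoid and $N\subseteq S$ a countably infinite connected set. Then $N$ is a necklace if and only if for every finite set $Y\subseteq N$ there is an element of $\mathcal K(N\setminus Y)$ containing almost all elements of $N$. Furthermore, if $N$ is a necklace, then the $X$-tail of $N$ is a necklace for every finite set $X\subseteq S$.
   Context: A connectoid is given by a set $S$ and a set $\mathcal F$ of finite subsets of $S$ such that (i) $F\cup F'\in\mathcal F$ whenever $F,F'\in\mathcal F$ and $F\cap F'\neq\emptyset$, and (ii) $\emptyset\in\mathcal F$ and $\{s\}\in\mathcal F$ for every $s\in S$. A set $C\subseteq S$ is connected if for all $x,y\in C$ there is $F\in\mathcal F$ with $F\subseteq C$ and $x,y\in F$; $\mathcal C$ is the set of connected sets. For $S'\subseteq S$, a component of $S'$ is a maximal connected subset of $S'$, and $\mathcal K(S')$ is the set of components of $S'$. "Almost all" means all but finitely many. A necklace is a connected set $N$ for which there is a family $(H_n)_{n\in\mathbb N}$ of finite connected sets with $N=\bigcup_n H_n$ and $H_i\cap H_j\neq\emptyset$ iff $|i-j|\le 1$. For a necklace $N$ and finite $X\subseteq S$, the $X$-tail of $N$ is the unique element of $\mathcal K(N\setminus X)$ containing almost all elements of $N$. *)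

theory Defs
  imports Main "HOL-Library.Countable_Set"
begin

definition connectoid :: "'a set \<Rightarrow> 'a set set \<Rightarrow> bool" where
  "connectoid S \<F> \<longleftrightarrow>
     (\<forall>F\<in>\<F>. finite F \<and> F \<subseteq> S) \<and>
     (\<forall>F\<in>\<F>. \<forall>F'\<in>\<F>. F \<inter> F' \<noteq> {} \<longrightarrow> F \<union> F' \<in> \<F>) \<and>
     {} \<in> \<F> \<and> (\<forall>s\<in>S. {s} \<in> \<F>)"

definition conn :: "'a set set \<Rightarrow> 'a set \<Rightarrow> bool" where
  "conn \<F> C \<longleftrightarrow> (\<forall>x\<in>C. \<forall>y\<in>C. \<exists>F\<in>\<F>. F \<subseteq> C \<and> x \<in> F \<and> y \<in> F)"

definition components :: "'a set set \<Rightarrow> 'a set \<Rightarrow> 'a set set" where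
  "components \<F> S' = {K. K \<subseteq> S' \<and> conn \<F> K \<and>
      (\<forall>K'. K \<subseteq> K' \<and> K' \<subseteq> S' \<and> conn \<F> K' \<longrightarrow> K' = K)}"

definition almost_all_in :: "'a set \<Rightarrow> 'a set \<Rightarrow> bool" where
  "almost_all_in N K \<longleftrightarrow> finite (N - K)"

definition necklace :: "'a set set \<Rightarrow> 'a set \<Rightarrow> bool" where
  "necklace \<F> N \<longleftrightarrow> conn \<F> N \<and>
     (\<exists>H :: nat \<Rightarrow> 'a set. N = (\<Union>n. H n) \<and>
        (\<forall>n. finite (H n) \<and> conn \<F> (H n)) \<and>
        (\<forall>i j. H i \<inter> H j \<noteq> {} \<longleftrightarrow> (i \<le> j + 1 \<and> j \<le> i + 1)))"

definition tail :: "'a set set \<Rightarrow> 'a set \<Rightarrow> 'a set \<Rightarrow> 'a set" where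
  "tail \<F> N X = (THE K. K \<in> components \<F> (N - X) \<and> almost_all_in N K)"

end

theory Submission
  imports Defs
begin

lemma cF_union: "connectoid S \<F> \<Longrightarrow> F \<in> \<F> \<Longrightarrow> F' \<in> \<F> \<Longrightarrow> F \<inter> F' \<noteq> {} \<Longrightarrow> F \<union> F' \<in> \<F>"
  unfolding connectoid_def by blast

lemma cF_finite: "connectoid S \<F> \<Longrightarrow> F \<in> \<F> \<Longrightarrow> finite F"
  unfolding connectoid_def by blast

lemma connD: "conn \<F> C \<Longrightarrow> x \<in> C \<Longrightarrow> y \<in> C \<Longrightarrow> \<exists>F\<in>\<F>. F \<subseteq> C \<and> x \<in> F \<and> y \<in> F"
  by (simp add: conn_def)

lemma conn_Un:
  assumes c: "connectoid S \<F>" and A: "conn \<F> A" and B: "conn \<F> B" and AB: "A \<inter> B \<noteq> {}"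
  shows "conn \<F> (A \<union> B)"
proof -
  obtain t where t: "t \<in> A" "t \<in> B" using AB by blast
  have g: "\<exists>F\<in>\<F>. F \<subseteq> A \<union> B \<and> x \<in> F \<and> y \<in> F"
    if x: "x \<in> A" and y: "y \<in> B" for x y
  proof -
    obtain F1 where F1: "F1 \<in> \<F>" "F1 \<subseteq> A" "x \<in> F1" "t \<in> F1" using connD[OF A x t(1)] by blast
    obtain F2 where F2: "F2 \<in> \<F>" "F2 \<subseteq> B" "t \<in> F2" "y \<in> F2" using connD[OF B t(2) y] by blast
    have "F1 \<inter> F2 \<noteq> {}" using F1(4) F2(3) by blast
    then have "F1 \<union> F2 \<in> \<F>" using cF_union[OF c F1(1) F2(1)] by simp
    moreover have "F1 \<union> F2 \<subseteq> A \<union> B" using F1(2) F2(2) by blast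
    ultimately show ?thesis using F1(3) F2(4) by blast
  qed
  show ?thesis unfolding conn_def
  proof (intro ballI)
    fix x y assume x: "x \<in> A \<union> B" and y: "y \<in> A \<union> B"
    show "\<exists>F\<in>\<F>. F \<subseteq> A \<union> B \<and> x \<in> F \<and> y \<in> F"
    proof (cases "x \<in> A")
      case xA: True
      show ?thesis
      proof (cases "y \<in> A")
        case True then obtain F where "F\<in>\<F>" "F \<subseteq> A" "x \<in> F" "y \<in> F" using connD[OF A xA] by blast
        then show ?thesis by blast
      next
        case False then have "y \<in> B" using y by blast
        then show ?thesis using g xA by blast
      qed
    next
      case xB: False
      then have xB: "x \<in> B" using x by blast
      show ?thesis
      proof (cases "y \<in> B")
        case True then obtain F where "F\<in>\<F>" "F \<subseteq> B" "x \<in> F" "y \<in> F" using connD[OF B xB] by blast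
        then show ?thesis by blast
      next
        case False then have "y \<in> A" using y by blast
        from g[OF this xB] show ?thesis by blast
      qed
    qed
  qed
qed

lemma compD: "K \<in> components \<F> M \<Longrightarrow> K \<subseteq> M \<and> conn \<F> K"
  by (simp add: components_def)

lemma compMax: "K \<in> components \<F> M \<Longrightarrow> K \<subseteq> K' \<Longrightarrow> K' \<subseteq> M \<Longrightarrow> conn \<F> K' \<Longrightarrow> K' = K"
  by (simp add: components_def)

lemma compI: "K \<subseteq> M \<Longrightarrow> conn \<F> K \<Longrightarrow> (\<And>K'. K \<subseteq> K' \<Longrightarrow> K' \<subseteq> M \<Longrightarrow> conn \<F> K' \<Longrightarrow> K' = K) \<Longrightarrow> K \<in> components \<F> M"
  by (simp add: components_def)

lemma comp_unique:
  assumes c: "connectoid S \<F>" and K1: "K1 \<in> components \<F> M" and K2: "K2 \<in> components \<F> M"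
    and i: "K1 \<inter> K2 \<noteq> {}"
  shows "K1 = K2"
proof -
  have "conn \<F> (K1 \<union> K2)" using conn_Un[OF c] compD[OF K1] compD[OF K2] i by blast
  moreover have "K1 \<union> K2 \<subseteq> M" using compD[OF K1] compD[OF K2] by blast
  ultimately have "K1 \<union> K2 = K1" "K1 \<union> K2 = K2"
    using compMax[OF K1, of "K1 \<union> K2"] compMax[OF K2, of "K1 \<union> K2"] by blast+
  then show ?thesis by blast
qed

lemma comp_exists:
  assumes c: "connectoid S \<F>" and T: "conn \<F> T" "T \<subseteq> M" "T \<noteq> {}"
  shows "\<exists>K\<in>components \<F> M. T \<subseteq> K"
proof -
  define K where "K = \<Union>{C. conn \<F> C \<and> T \<subseteq> C \<and> C \<subseteq> M}"
  obtain t where t: "t \<in> T" using T by blast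
  have cK: "conn \<F> K" unfolding conn_def
  proof (intro ballI)
    fix x y assume "x \<in> K" "y \<in> K"
    then obtain C1 C2 where C: "conn \<F> C1" "T \<subseteq> C1" "C1 \<subseteq> M" "x \<in> C1"
       "conn \<F> C2" "T \<subseteq> C2" "C2 \<subseteq> M" "y \<in> C2" unfolding K_def by blast
    have i: "C1 \<inter> C2 \<noteq> {}" using C(2) C(6) t by blast
    have cc: "conn \<F> (C1 \<union> C2)" using conn_Un[OF c C(1) C(5) i] .
    have sub: "C1 \<union> C2 \<subseteq> K" unfolding K_def using cc C by blast
    obtain F where "F \<in> \<F>" "F \<subseteq> C1 \<union> C2" "x \<in> F" "y \<in> F" using connD[OF cc, of x y] C(4) C(8) by blast
    then show "\<exists>F\<in>\<F>. F \<subseteq> K \<and> x \<in> F \<and> y \<in> F" using sub by blast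
  qed
  have TK: "T \<subseteq> K" using T unfolding K_def by blast
  have KM: "K \<subseteq> M" unfolding K_def by blast
  have "K \<in> components \<F> M"
  proof (rule compI[OF KM cK])
    fix K' assume h: "K \<subseteq> K'" "K' \<subseteq> M" "conn \<F> K'"
    then have "K' \<subseteq> K" using TK unfolding K_def by blast
    then show "K' = K" using h by blast
  qed
  then show ?thesis using TK by blast
qed

lemma cofinite_meet:
  assumes "infinite N" "finite (N - K)" "finite (N - K')"
  shows "K \<inter> K' \<noteq> {}"
proof
  assume "K \<inter> K' = {}"
  then have "N \<subseteq> (N - K) \<union> (N - K')" by blast
  then show False using assms by (meson finite_UnI finite_subset)
qed

lemma conn_chain_fin:
  assumes c: "connectoid S \<F>" and cH: "\<And>n. conn \<F> (H n)" and iH: "\<And>n. H n \<inter> H (Suc n) \<noteq> {}"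
  shows "conn \<F> (\<Union>n\<in>{m..m+k}. H n)"
proof (induction k)
  case 0 then show ?case using cH by simp
next
  case (Suc k)
  have eq: "(\<Union>n\<in>{m..m+Suc k}. H n) = (\<Union>n\<in>{m..m+k}. H n) \<union> H (Suc (m+k))"
    by (simp add: atLeastAtMostSuc_conv Un_commute)
  have "H (m+k) \<subseteq> (\<Union>n\<in>{m..m+k}. H n)" by (rule UN_upper) simp
  then have i: "(\<Union>n\<in>{m..m+k}. H n) \<inter> H (Suc (m+k)) \<noteq> {}" using iH[of "m+k"] by blast
  show ?case unfolding eq by (rule conn_Un[OF c Suc.IH cH i])
qed

lemma conn_chain:
  assumes c: "connectoid S \<F>" and cH: "\<And>n. conn \<F> (H n)" and iH: "\<And>n. H n \<inter> H (Suc n) \<noteq> {}"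
  shows "conn \<F> (\<Union>n\<in>{m..}. H n)"
  unfolding conn_def
proof (intro ballI)
  fix x y assume x: "x \<in> (\<Union>n\<in>{m..}. H n)" and y: "y \<in> (\<Union>n\<in>{m..}. H n)"
  obtain a where a: "a \<ge> m" "x \<in> H a" using x by auto
  obtain b where b: "b \<ge> m" "y \<in> H b" using y by auto
  let ?U = "\<Union>n\<in>{m..m+(a+b)}. H n"
  have "a \<in> {m..m+(a+b)}" "b \<in> {m..m+(a+b)}" using a b by auto
  then have xU: "x \<in> ?U" and yU: "y \<in> ?U" using a b by (meson UN_I)+
  obtain F where F: "F \<in> \<F>" "F \<subseteq> ?U" "x \<in> F" "y \<in> F"
    using connD[OF conn_chain_fin[where H=H and m=m and k="a+b", OF c cH iH] xU yU] by blast
  have "{m..m+(a+b)} \<subseteq> {m..}" by auto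
  then have "?U \<subseteq> (\<Union>n\<in>{m..}. H n)" by (rule UN_mono) simp
  with F(2) have "F \<subseteq> (\<Union>n\<in>{m..}. H n)" by (rule order_trans)
  with F(1,3,4) show "\<exists>F\<in>\<F>. F \<subseteq> (\<Union>n\<in>{m..}. H n) \<and> x \<in> F \<and> y \<in> F" by (intro bexI[of _ F]) auto
qed

lemma fwd:
  assumes c: "connectoid S \<F>" and nk: "necklace \<F> N" and Y: "finite Y" "Y \<subseteq> N"
  shows "\<exists>K\<in>components \<F> (N - Y). almost_all_in N K"
proof -
  have ex: "\<exists>H :: nat \<Rightarrow> 'a set. N = (\<Union>n. H n) \<and>
        (\<forall>n. finite (H n) \<and> conn \<F> (H n)) \<and>
        (\<forall>i j. H i \<inter> H j \<noteq> {} \<longleftrightarrow> (i \<le> j + 1 \<and> j \<le> i + 1))"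
    using nk unfolding necklace_def by (rule conjunct2)
  define H where "H = (SOME H :: nat \<Rightarrow> 'a set. N = (\<Union>n. H n) \<and>
        (\<forall>n. finite (H n) \<and> conn \<F> (H n)) \<and>
        (\<forall>i j. H i \<inter> H j \<noteq> {} \<longleftrightarrow> (i \<le> j + 1 \<and> j \<le> i + 1)))"
  have Hall: "N = (\<Union>n. H n) \<and>
        (\<forall>n. finite (H n) \<and> conn \<F> (H n)) \<and>
        (\<forall>i j. H i \<inter> H j \<noteq> {} \<longleftrightarrow> (i \<le> j + 1 \<and> j \<le> i + 1))"
    unfolding H_def by (rule someI_ex[OF ex])
  have H: "N = (\<Union>n. H n)" "\<And>n. finite (H n)" "\<And>n. conn \<F> (H n)"
    "\<And>i j. H i \<inter> H j \<noteq> {} \<longleftrightarrow> (i \<le> j + 1 \<and> j \<le> i + 1)"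
    using Hall by simp_all
  have iH: "H n \<inter> H (Suc n) \<noteq> {}" for n using H(4)[of n "Suc n"] by simp
  have ne: "H n \<noteq> {}" for n using H(4)[of n n] by simp
  have HN: "x \<in> N \<longleftrightarrow> (\<exists>n. x \<in> H n)" for x using H(1) by auto
  have "\<forall>y\<in>Y. \<exists>n. y \<in> H n" using Y HN by blast
  from bchoice[OF this] obtain f where f0: "\<forall>y\<in>Y. y \<in> H (f y)" by blast
  have f: "y \<in> H (f y)" if "y \<in> Y" for y using f0 that by blast
  define m where "m = Suc (Max (f ` Y \<union> {0}))"
  have fm: "f y < m" if "y \<in> Y" for y
  proof -
    have "f y \<le> Max (f ` Y \<union> {0})" using that Y(1) by (intro Max_ge) auto
    then show ?thesis unfolding m_def by simp
  qed
  define T where "T = (\<Union>n\<in>{Suc m..}. H n)"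
  have cT: "conn \<F> T" unfolding T_def by (rule conn_chain[where H=H, OF c H(3) iH])
  have TY: "T \<inter> Y = {}"
  proof (rule ccontr)
    assume "T \<inter> Y \<noteq> {}"
    then obtain y n where "y \<in> Y" "n \<ge> Suc m" "y \<in> H n" unfolding T_def by auto
    moreover then have "y \<in> H (f y)" "f y < m" using f fm by auto
    ultimately show False using H(4)[of n "f y"] by auto
  qed
  have TN: "T \<subseteq> N" unfolding T_def using HN by auto
  have "H (Suc m) \<subseteq> T" unfolding T_def by (rule UN_upper) simp
  then have Tne: "T \<noteq> {}" using ne[of "Suc m"] by blast
  have TNY: "T \<subseteq> N - Y" using TN TY by blast
  obtain K where K: "K \<in> components \<F> (N - Y)" "T \<subseteq> K"
    using comp_exists[OF c cT TNY Tne] by blast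
  have "N - K \<subseteq> (\<Union>n\<in>{..m}. H n)"
  proof
    fix x assume "x \<in> N - K"
    then obtain n where "x \<in> H n" "x \<notin> T" using HN K(2) by blast
    then have "n \<notin> {Suc m..}" unfolding T_def by auto
    then have "n \<le> m" by simp
    then show "x \<in> (\<Union>n\<in>{..m}. H n)" using \<open>x \<in> H n\<close> by auto
  qed
  moreover have "finite (\<Union>n\<in>{..m}. H n)" using H(2) by simp
  ultimately have "almost_all_in N K" unfolding almost_all_in_def using finite_subset by blast
  then show ?thesis using K by blast
qed

definition clo_set :: "'a set set \<Rightarrow> 'a set \<Rightarrow> 'a set \<Rightarrow> bool" where
  "clo_set \<F> N Y \<longleftrightarrow> finite Y \<and> Y \<subseteq> N \<and> conn \<F> (N - Y)"

lemma connF: "F \<in> \<F> \<Longrightarrow> conn \<F> F"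
  unfolding conn_def by blast

lemma cl_ext:
  assumes P: "\<forall>Y. finite Y \<and> Y \<subseteq> N \<longrightarrow> (\<exists>K\<in>components \<F> (N - Y). almost_all_in N K)"
    and Y: "finite Y" "Y \<subseteq> N"
  shows "\<exists>Y'. clo_set \<F> N Y' \<and> Y \<subseteq> Y'"
proof -
  obtain K where K: "K \<in> components \<F> (N - Y)" "almost_all_in N K" using P Y by blast
  have KN: "K \<subseteq> N - Y" "conn \<F> K" using compD[OF K(1)] by auto
  have e: "N - (N - K) = K" using KN by blast
  have "clo_set \<F> N (N - K)" unfolding clo_set_def e using K(2) KN unfolding almost_all_in_def by blast
  moreover have "Y \<subseteq> N - K" using KN Y by blast
  ultimately show ?thesis by blast
qed

lemma hull:
  assumes c: "connectoid S \<F>" and C: "conn \<F> C" and P: "finite P" "P \<noteq> {}" "P \<subseteq> C"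
  shows "\<exists>H. finite H \<and> conn \<F> H \<and> P \<subseteq> H \<and> H \<subseteq> C"
  using P
proof (induction P rule: finite_ne_induct)
  case (singleton x)
  then have x: "x \<in> C" by simp
  obtain F where F: "F \<in> \<F>" "F \<subseteq> C" "x \<in> F" using connD[OF C x x] by blast
  have "finite F" "conn \<F> F" using cF_finite[OF c F(1)] connF[OF F(1)] by auto
  then show ?case using F by blast
next
  case (insert x P)
  then obtain H' where H': "finite H'" "conn \<F> H'" "P \<subseteq> H'" "H' \<subseteq> C" by blast
  obtain y where y: "y \<in> P" using insert(2) by blast
  have x: "x \<in> C" and yC: "y \<in> C" using insert(5) y by auto
  obtain F where F: "F \<in> \<F>" "F \<subseteq> C" "x \<in> F" "y \<in> F" using connD[OF C x yC] by blast
  have i: "H' \<inter> F \<noteq> {}" using y H'(3) F(4) by blast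
  have "conn \<F> (H' \<union> F)" using conn_Un[OF c H'(2) connF[OF F(1)] i] .
  moreover have "finite (H' \<union> F)" using H'(1) cF_finite[OF c F(1)] by simp
  moreover have "insert x P \<subseteq> H' \<union> F" using H'(3) F(3) by blast
  moreover have "H' \<union> F \<subseteq> C" using H'(4) F(2) by blast
  ultimately show ?case by blast
qed

lemma bwd:
  assumes c: "connectoid S \<F>" and cN: "countable N" and iN: "infinite N" and conN: "conn \<F> N"
    and P: "\<forall>Y. finite Y \<and> Y \<subseteq> N \<longrightarrow> (\<exists>K\<in>components \<F> (N - Y). almost_all_in N K)"
  shows "necklace \<F> N"
proof -
  define v where "v = from_nat_into N"
  have Nne: "N \<noteq> {}" using iN by auto
  have vN: "v n \<in> N" for n unfolding v_def by (rule from_nat_into[OF Nne])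
  have vs: "\<exists>n. v n = x" if "x \<in> N" for x unfolding v_def using from_nat_into_surj[OF cN that] .
  define clo where "clo Y = (SOME Y'. clo_set \<F> N Y' \<and> Y \<subseteq> Y')" for Y
  have clo: "clo_set \<F> N (clo Y) \<and> Y \<subseteq> clo Y" if "finite Y" "Y \<subseteq> N" for Y
    unfolding clo_def by (rule someI_ex[OF cl_ext[OF P that]])
  define hh where "hh B A = (SOME H. finite H \<and> conn \<F> H \<and> A - B \<subseteq> H \<and> H \<subseteq> N - B \<and> \<not> H \<subseteq> A)" for B A
  have hh: "finite (hh B A) \<and> conn \<F> (hh B A) \<and> A - B \<subseteq> hh B A \<and> hh B A \<subseteq> N - B \<and> \<not> hh B A \<subseteq> A"
    if h: "conn \<F> (N - B)" "B \<subseteq> A" "clo_set \<F> N A" "A - B \<noteq> {}" for B A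
  proof -
    have Af: "finite A" "A \<subseteq> N" using h(3) unfolding clo_set_def by auto
    have "infinite (N - A)" using iN Af(1) by (rule Diff_infinite_finite[rotated])
    then have "N - A \<noteq> {}" by (metis finite.emptyI)
    then obtain p where "p \<in> N - A" by blast
    then have p: "p \<in> N" "p \<notin> A" by simp_all
    have f1: "finite ((A - B) \<union> {p})" using Af(1) by simp
    have f2: "(A - B) \<union> {p} \<noteq> {}" by simp
    have f3: "(A - B) \<union> {p} \<subseteq> N - B" using Af(2) p h(2) by blast
    obtain H where H: "finite H" "conn \<F> H" "(A - B) \<union> {p} \<subseteq> H" "H \<subseteq> N - B"
      using hull[OF c h(1) f1 f2 f3] by blast
    have "finite H \<and> conn \<F> H \<and> A - B \<subseteq> H \<and> H \<subseteq> N - B \<and> \<not> H \<subseteq> A"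
      using H p by blast
    then have ex: "\<exists>H. finite H \<and> conn \<F> H \<and> A - B \<subseteq> H \<and> H \<subseteq> N - B \<and> \<not> H \<subseteq> A" by (rule exI)
    show ?thesis unfolding hh_def by (rule someI_ex[OF ex])
  qed
  define st where "st = rec_nat ({}, clo {v 0}) (\<lambda>n st. (snd st, clo (snd st \<union> hh (fst st) (snd st) \<union> {v (Suc n)})))"
  define A where "A n = snd (st n)" for n
  define B where "B n = fst (st n)" for n
  have st0: "B 0 = {}" "A 0 = clo {v 0}" by (simp_all add: A_def B_def st_def)
  have stS: "B (Suc n) = A n" "A (Suc n) = clo (A n \<union> hh (B n) (A n) \<union> {v (Suc n)})" for n
    by (simp_all add: A_def B_def st_def)
  have inv: "conn \<F> (N - B n) \<and> B n \<subseteq> A n \<and> clo_set \<F> N (A n) \<and> A n - B n \<noteq> {} \<and> v n \<in> A n" for n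
  proof (induction n)
    case 0
    have "clo_set \<F> N (A 0) \<and> {v 0} \<subseteq> A 0" unfolding st0 using clo[of "{v 0}"] vN by simp
    then show ?case using conN st0 by auto
  next
    case (Suc n)
    then have a: "conn \<F> (N - B n)" "B n \<subseteq> A n" "clo_set \<F> N (A n)" "A n - B n \<noteq> {}" by auto
    note hn = hh[OF a]
    let ?U = "A n \<union> hh (B n) (A n) \<union> {v (Suc n)}"
    have h1: "finite (hh (B n) (A n))" "hh (B n) (A n) \<subseteq> N - B n" "\<not> hh (B n) (A n) \<subseteq> A n"
      using hn by simp_all
    have a3: "finite (A n)" "A n \<subseteq> N" "conn \<F> (N - A n)" using a(3) unfolding clo_set_def by simp_all
    have fU: "finite ?U" using h1(1) a3(1) by simp
    have sU: "?U \<subseteq> N" using h1(2) a3(2) vN[of "Suc n"] by blast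
    have cU0: "clo_set \<F> N (clo ?U) \<and> ?U \<subseteq> clo ?U" by (rule clo[OF fU sU])
    have cU: "clo_set \<F> N (A (Suc n))" "?U \<subseteq> A (Suc n)" using cU0 stS(2)[of n] by simp_all
    have "conn \<F> (N - B (Suc n))" using a3(3) stS(1)[of n] by simp
    moreover have "B (Suc n) \<subseteq> A (Suc n)" using cU(2) stS(1)[of n] by simp
    moreover have "A (Suc n) - B (Suc n) \<noteq> {}" using cU(2) h1(3) stS(1)[of n] by blast
    moreover have "v (Suc n) \<in> A (Suc n)" using cU(2) by simp
    ultimately show ?case using cU(1) by blast
  qed
  define Hs where "Hs n = hh (B n) (A n)" for n
  have inv': "conn \<F> (N - B n)" "B n \<subseteq> A n" "clo_set \<F> N (A n)" "A n - B n \<noteq> {}" "v n \<in> A n" for n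
    using inv[of n] by simp_all
  have Hs: "finite (Hs n) \<and> conn \<F> (Hs n) \<and> A n - B n \<subseteq> Hs n \<and> Hs n \<subseteq> N - B n \<and> \<not> Hs n \<subseteq> A n" for n
    unfolding Hs_def by (rule hh[OF inv'(1) inv'(2) inv'(3) inv'(4)])
  have HsA: "Hs n \<subseteq> A (Suc n)" for n
  proof -
    have a: "finite (A n)" "A n \<subseteq> N" using inv'(3)[of n] unfolding clo_set_def by simp_all
    have h: "finite (Hs n)" "Hs n \<subseteq> N - B n" using Hs[of n] by simp_all
    have f: "finite (A n \<union> Hs n \<union> {v (Suc n)})" using a h by simp
    have sb: "A n \<union> Hs n \<union> {v (Suc n)} \<subseteq> N" using a h vN[of "Suc n"] by blast
    have "A n \<union> Hs n \<union> {v (Suc n)} \<subseteq> clo (A n \<union> Hs n \<union> {v (Suc n)})" using clo[OF f sb] by simp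
    then have "A n \<union> Hs n \<union> {v (Suc n)} \<subseteq> A (Suc n)" using stS(2)[of n] unfolding Hs_def by simp
    then show ?thesis by blast
  qed
  have Amono1: "A n \<subseteq> A (Suc n)" for n using inv'(2)[of "Suc n"] stS(1)[of n] by simp
  have Amono: "A i \<subseteq> A j" if "i \<le> j" for i j using lift_Suc_mono_le[of A, OF Amono1 that] .
  have cover: "\<exists>m. x \<in> Hs m" if "x \<in> A n" for x n
    using that
  proof (induction n)
    case 0
    have "A 0 - B 0 \<subseteq> Hs 0" using Hs[of 0] by simp
    then show ?case using 0 st0(1) by blast
  next
    case (Suc n)
    show ?case
    proof (cases "x \<in> A n")
      case True then show ?thesis using Suc.IH by blast
    next
      case False then have "x \<in> A (Suc n) - B (Suc n)" using Suc.prems stS(1)[of n] by simp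
      moreover have "A (Suc n) - B (Suc n) \<subseteq> Hs (Suc n)" using Hs[of "Suc n"] by simp
      ultimately show ?thesis by blast
    qed
  qed
  have NU: "N = (\<Union>n. Hs n)"
  proof
    show "N \<subseteq> (\<Union>n. Hs n)"
    proof
      fix x assume "x \<in> N"
      then obtain n where "v n = x" using vs by blast
      then have "x \<in> A n" using inv'(5)[of n] by simp
      then obtain m where "x \<in> Hs m" using cover by blast
      then show "x \<in> (\<Union>n. Hs n)" by blast
    qed
    have "Hs n \<subseteq> N" for n using Hs[of n] by blast
    then show "(\<Union>n. Hs n) \<subseteq> N" by blast
  qed
  have adj: "Hs i \<inter> Hs (Suc i) \<noteq> {}" for i
  proof -
    obtain p where p: "p \<in> Hs i" "p \<notin> A i" using Hs[of i] by blast
    then have "p \<in> A (Suc i) - B (Suc i)" using HsA[of i] stS by blast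
    then have "p \<in> Hs (Suc i)" using Hs[of "Suc i"] by blast
    then show ?thesis using p by blast
  qed
  have far: "Hs i \<inter> Hs j = {}" if "i + 2 \<le> j" for i j
  proof -
    define k where "k = j - 1"
    have k: "j = Suc k" "Suc i \<le> k" using that unfolding k_def by arith+
    have "Hs i \<subseteq> A k" using HsA[of i] Amono[OF k(2)] by blast
    moreover have "Hs j \<subseteq> N - A k" using Hs[of j] stS k(1) by simp
    ultimately show ?thesis by blast
  qed
  have self: "Hs i \<noteq> {}" for i using Hs[of i] inv[of i] by blast
  have iff: "Hs i \<inter> Hs j \<noteq> {} \<longleftrightarrow> (i \<le> j + 1 \<and> j \<le> i + 1)" for i j
  proof (cases "i \<le> j + 1 \<and> j \<le> i + 1")
    case True
    then have "i = j \<or> j = Suc i \<or> i = Suc j" by auto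
    then have "Hs i \<inter> Hs j \<noteq> {}" using adj[of i] adj[of j] self[of i] by auto
    then show ?thesis using True by simp
  next
    case False
    then have "i + 2 \<le> j \<or> j + 2 \<le> i" by auto
    then have "Hs i \<inter> Hs j = {}" using far[of i j] far[of j i] by auto
    then show ?thesis using False by simp
  qed
  show ?thesis unfolding necklace_def
  proof (intro conjI exI[of _ Hs])
    show "conn \<F> N" by (rule conN)
    show "N = (\<Union>n. Hs n)" by (rule NU)
    show "\<forall>n. finite (Hs n) \<and> conn \<F> (Hs n)" using Hs by blast
    show "\<forall>i j. Hs i \<inter> Hs j \<noteq> {} \<longleftrightarrow> (i \<le> j + 1 \<and> j \<le> i + 1)" using iff by blast
  qed
qed

theorem corollary2p3:
  fixes S :: "'a set" and \<F> :: "'a set set" and N :: "'a set"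
  assumes "connectoid S \<F>"
    and "N \<subseteq> S" and "countable N" and "infinite N" and "conn \<F> N"
  shows "(necklace \<F> N \<longleftrightarrow>
           (\<forall>Y. finite Y \<and> Y \<subseteq> N \<longrightarrow>
              (\<exists>K\<in>components \<F> (N - Y). almost_all_in N K)))
      \<and> (necklace \<F> N \<longrightarrow>
           (\<forall>X. finite X \<and> X \<subseteq> S \<longrightarrow> necklace \<F> (tail \<F> N X)))"
proof (intro conjI)
  note c = assms(1) and cN = assms(3) and iN = assms(4) and conN = assms(5)
  show "necklace \<F> N \<longleftrightarrow>
           (\<forall>Y. finite Y \<and> Y \<subseteq> N \<longrightarrow>
              (\<exists>K\<in>components \<F> (N - Y). almost_all_in N K))"
  proof
    assume "necklace \<F> N"
    then show "\<forall>Y. finite Y \<and> Y \<subseteq> N \<longrightarrow> (\<exists>K\<in>components \<F> (N - Y). almost_all_in N K)"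
      using fwd[OF c] by blast
  next
    assume "\<forall>Y. finite Y \<and> Y \<subseteq> N \<longrightarrow> (\<exists>K\<in>components \<F> (N - Y). almost_all_in N K)"
    then show "necklace \<F> N" by (rule bwd[OF c cN iN conN])
  qed
  show "necklace \<F> N \<longrightarrow> (\<forall>X. finite X \<and> X \<subseteq> S \<longrightarrow> necklace \<F> (tail \<F> N X))"
  proof (intro impI allI)
    fix X assume nk: "necklace \<F> N" and X: "finite X \<and> X \<subseteq> S"
    let ?Y0 = "X \<inter> N"
    have Y0: "finite ?Y0" "?Y0 \<subseteq> N" using X by auto
    have eq: "N - ?Y0 = N - X" by blast
    obtain K where K: "K \<in> components \<F> (N - X)" "almost_all_in N K"
      using fwd[OF c nk Y0] unfolding eq by blast
    have KN: "K \<subseteq> N - X" "conn \<F> K" using compD[OF K(1)] by auto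
    have tl: "tail \<F> N X = K" unfolding tail_def
    proof (rule the_equality)
      show "K \<in> components \<F> (N - X) \<and> almost_all_in N K" using K by simp
    next
      fix K' assume h: "K' \<in> components \<F> (N - X) \<and> almost_all_in N K'"
      have "K' \<inter> K \<noteq> {}" using cofinite_meet[OF iN] h K(2) unfolding almost_all_in_def by blast
      then show "K' = K" using comp_unique[OF c _ K(1)] h by blast
    qed
    have cK: "countable K" using countable_subset[OF _ cN] KN(1) by blast
    have iK: "infinite K"
    proof
      assume "finite K"
      moreover have "N \<subseteq> (N - K) \<union> K" by blast
      ultimately show False using K(2) iN unfolding almost_all_in_def by (meson finite_UnI finite_subset)
    qed
    have PK: "\<forall>Y. finite Y \<and> Y \<subseteq> K \<longrightarrow> (\<exists>K'\<in>components \<F> (K - Y). almost_all_in K K')"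
    proof (intro allI impI)
      fix Y assume Y: "finite Y \<and> Y \<subseteq> K"
      let ?Y' = "Y \<union> ?Y0"
      have Y': "finite ?Y'" "?Y' \<subseteq> N" using Y Y0 KN(1) by auto
      obtain K' where K': "K' \<in> components \<F> (N - ?Y')" "almost_all_in N K'"
        using fwd[OF c nk Y'] by blast
      have K'N: "K' \<subseteq> N - ?Y'" "conn \<F> K'" using compD[OF K'(1)] by auto
      have i: "K \<inter> K' \<noteq> {}" using cofinite_meet[OF iN] K(2) K'(2) unfolding almost_all_in_def by blast
      have cu: "conn \<F> (K \<union> K')" by (rule conn_Un[OF c KN(2) K'N(2) i])
      have "K \<union> K' \<subseteq> N - X" using KN(1) K'N(1) by blast
      then have "K \<union> K' = K" using compMax[OF K(1) _ _ cu] by blast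
      then have K'K: "K' \<subseteq> K" by blast
      have "K' \<in> components \<F> (K - Y)"
      proof (rule compI)
        show "K' \<subseteq> K - Y" using K'K K'N(1) by blast
        show "conn \<F> K'" by (rule K'N(2))
      next
        fix K'' assume h: "K' \<subseteq> K''" "K'' \<subseteq> K - Y" "conn \<F> K''"
        have "K'' \<subseteq> N - ?Y'" using h(2) KN(1) by blast
        then show "K'' = K'" using compMax[OF K'(1) h(1) _ h(3)] by blast
      qed
      moreover have "almost_all_in K K'"
      proof -
        have "K - K' \<subseteq> N - K'" using KN(1) by blast
        then show ?thesis using K'(2) unfolding almost_all_in_def by (rule finite_subset)
      qed
      ultimately show "\<exists>K'\<in>components \<F> (K - Y). almost_all_in K K'" by blast
    qed
    have "K \<subseteq> S" using KN(1) assms(2) by blast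
    show "necklace \<F> (tail \<F> N X)" unfolding tl by (rule bwd[OF c cK iK KN(2) PK])
  qed
qed

end
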